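(* Let $N \ge 2$ and consider $N$ electrons with positions $r = (r_1,\dots,r_N) \in \mathbb{R}^{3N}$, $r_i \in \mathbb{R}^3$, each carrying a fixed spin label $\rho_i \in \{\uparrow,\downarrow\}$. For a transposition $\tau$ of two indices $i \neq j$ with $\rho_i = \rho_j$, write $\tau r$ for the configuration obtained from $r$ by exchanging $r_i$ and $r_j$. Let $K \ge 1$, let $\gamma_1,\dots,\gamma_K \in \mathbb{R}$, let $\beta_1,\beta_2 \in \mathbb{R}\setminus\{0\}$, and let $\alpha^{(1)},\dots,\alpha^{(K)} : \mathbb{R}^{3N} \to \mathbb{R}^N$ be maps that are equivariant under exchange of same-spin electrons, i.e. for every transposition $\tau$ of two same-spin indices $i,j$ and every $r$, the vector $\alpha^{(k)}(\tau r)$ is obtained from $\alpha^{(k)}(r)$ by swapping its $i$-th and $j$-th entries. Define the Sortlet ansatz $$\Psi(r) = \exp[J_\beta(r)] \sum_{k=1}^K \Psi_{\alpha^{(k)}}(r)\, e^{-\gamma_k \sum_{j=1}^N |r_j|},$$ where $$J_\beta(r) = \sum_{i<j,\ \rho_i = \rho_j} \frac{-1}{4}\,\frac{\beta_1}{\beta_1^2 + |r_i - r_j|} + \sum_{i<j,\ \rho_i \ne \rho_j} \frac{-1}{2}\,\frac{\beta_2}{\beta_2^2 + |r_i - r_j|}$$ and $\Psi_\alpha$ denotes the sortlet defined in the context. Then $\Psi$ is antisymmetric under exchange of any two electrons with the same spin: $\Psi(\tau r) = -\Psi(r)$ for every $r \in \mathbb{R}^{3N}$ and every transposition $\tau$ of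 two same-spin indices.
   Context: Sortlet: for a map $\alpha = (\alpha_1,\dots,\alpha_N) : \mathbb{R}^{3N} \to \mathbb{R}^N$ and a configuration $r$ at which the values $\alpha_1(r),\dots,\alpha_N(r)$ are pairwise distinct, let $\pi_\alpha = \pi_{\alpha(r)}$ be the unique permutation of $\{1,\dots,N\}$ with $\alpha_{\pi_\alpha(1)}(r) < \alpha_{\pi_\alpha(2)}(r) < \dots < \alpha_{\pi_\alpha(N)}(r)$ (the permutation that sorts $\alpha(r)$), and set $$\Psi_\alpha(r) = \sigma(\pi_\alpha) \prod_{i=1}^{N-1} \big(\alpha_{\pi_\alpha(i+1)}(r) - \alpha_{\pi_\alpha(i)}(r)\big),$$ where $\sigma(\pi) \in \{+1,-1\}$ is the sign (parity) of the permutation $\pi$. At configurations where two values $\alpha_i(r)$ coincide, the product of consecutive sorted differences vanishes, and $\Psi_\alpha(r) = 0$. $|\cdot|$ denotes the Euclidean norm on $\mathbb{R}^3$. *)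

theory Defs
  imports "HOL-Analysis.Analysis" "HOL-Combinatorics.Permutations" "HOL-Combinatorics.Transposition"
begin

text \<open>Electron indices are 0,...,N-1. A configuration in R^(3N) is a map
  r :: nat => real^3 that vanishes at indices >= N.\<close>

definition config :: "nat \<Rightarrow> (nat \<Rightarrow> real^3) set" where
  "config N = {r. \<forall>i\<ge>N. r i = 0}"

definition swap_conf :: "nat \<Rightarrow> nat \<Rightarrow> (nat \<Rightarrow> real^3) \<Rightarrow> (nat \<Rightarrow> real^3)" where
  "swap_conf i j r = r \<circ> Transposition.transpose i j"

text \<open>The permutation sorting the values a 0, ..., a (N-1) (assumed pairwise distinct).\<close>
definition sort_perm :: "nat \<Rightarrow> (nat \<Rightarrow> real) \<Rightarrow> (nat \<Rightarrow> nat)" where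
  "sort_perm N a = (THE p. p permutes {0..<N} \<and> (\<forall>i. Suc i < N \<longrightarrow> a (p i) < a (p (Suc i))))"

definition sortlet :: "nat \<Rightarrow> (nat \<Rightarrow> real) \<Rightarrow> real" where
  "sortlet N a = (if inj_on a {0..<N}
     then of_int (sign (sort_perm N a)) *
          (\<Prod>i<N - 1. a (sort_perm N a (Suc i)) - a (sort_perm N a i))
     else 0)"

definition jastrow :: "nat \<Rightarrow> (nat \<Rightarrow> bool) \<Rightarrow> real \<Rightarrow> real \<Rightarrow> (nat \<Rightarrow> real^3) \<Rightarrow> real" where
  "jastrow N \<rho> \<beta>1 \<beta>2 r =
     (\<Sum>(i,j)\<in>{(i,j). i < j \<and> j < N \<and> \<rho> i = \<rho> j}.
        (-1/4) * (\<beta>1 / (\<beta>1^2 + norm (r i - r j))))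
   + (\<Sum>(i,j)\<in>{(i,j). i < j \<and> j < N \<and> \<rho> i \<noteq> \<rho> j}.
        (-1/2) * (\<beta>2 / (\<beta>2^2 + norm (r i - r j))))"

definition sortlet_ansatz ::
  "nat \<Rightarrow> (nat \<Rightarrow> bool) \<Rightarrow> nat \<Rightarrow> (nat \<Rightarrow> real) \<Rightarrow> real \<Rightarrow> real
   \<Rightarrow> (nat \<Rightarrow> (nat \<Rightarrow> real^3) \<Rightarrow> (nat \<Rightarrow> real)) \<Rightarrow> (nat \<Rightarrow> real^3) \<Rightarrow> real" where
  "sortlet_ansatz N \<rho> K \<gamma> \<beta>1 \<beta>2 \<alpha> r =
     exp (jastrow N \<rho> \<beta>1 \<beta>2 r) *
     (\<Sum>k<K. sortlet N (\<alpha> k r) * exp (- \<gamma> k * (\<Sum>j<N. norm (r j))))"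

end

theory Submission
  imports Defs
begin

definition sortP :: "nat \<Rightarrow> (nat \<Rightarrow> real) \<Rightarrow> (nat \<Rightarrow> nat) \<Rightarrow> bool" where
  "sortP N a p \<longleftrightarrow> p permutes {0..<N} \<and> (\<forall>i. Suc i < N \<longrightarrow> a (p i) < a (p (Suc i)))"

lemma perm_lt:
  fixes N :: nat
  assumes "p permutes {0..<N}" "x < N" shows "p x < N"
  using permutes_in_image[OF assms(1), of x] assms(2) by auto

lemma sortP_mono:
  assumes "sortP N a p" "i < k" "k < N"
  shows "a (p i) < a (p k)"
  using assms(2,3)
proof (induction k)
  case 0 then show ?case by simp
next
  case (Suc k)
  have step: "a (p k) < a (p (Suc k))" using assms(1) Suc.prems unfolding sortP_def by blast
  show ?case
  proof (cases "i = k")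
    case True then show ?thesis using step by simp
  next
    case False then have "a (p i) < a (p k)" using Suc by simp
    then show ?thesis using step by simp
  qed
qed

lemma sortP_list:
  assumes "sortP N a p"
  shows "map (\<lambda>i. a (p i)) [0..<N] = sorted_list_of_set (a ` {0..<N})"
proof (rule sorted_distinct_set_unique)
  have sw: "sorted_wrt (<) (map (\<lambda>i. a (p i)) [0..<N])"
    unfolding sorted_wrt_iff_nth_less using sortP_mono[OF assms] by auto
  then show "sorted (map (\<lambda>i. a (p i)) [0..<N])" "distinct (map (\<lambda>i. a (p i)) [0..<N])"
    by (auto simp: strict_sorted_iff)
  have pp: "p permutes {0..<N}" using assms unfolding sortP_def by blast
  have "set (map (\<lambda>i. a (p i)) [0..<N]) = a ` (p ` {0..<N})" by auto
  also have "\<dots> = a ` {0..<N}" using permutes_image[OF pp] by simp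
  finally show "set (map (\<lambda>i. a (p i)) [0..<N]) = set (sorted_list_of_set (a ` {0..<N}))" by simp
qed auto

lemma sortP_unique:
  assumes "inj_on a {0..<N}" "sortP N a p" "sortP N a q"
  shows "p = q"
proof
  fix x
  show "p x = q x"
  proof (cases "x < N")
    case True
    have "map (\<lambda>i. a (p i)) [0..<N] = map (\<lambda>i. a (q i)) [0..<N]"
      using sortP_list[OF assms(2)] sortP_list[OF assms(3)] by simp
    then have "a (p x) = a (q x)" using True
      by (metis (no_types, lifting) add_0 diff_zero length_upt nth_map nth_upt)
    moreover have "p x \<in> {0..<N}" "q x \<in> {0..<N}"
      using assms(2,3) True unfolding sortP_def by (auto intro: perm_lt)
    ultimately show ?thesis using assms(1) by (auto dest: inj_onD)
  next
    case False
    then have "p x = x" "q x = x" using assms(2,3) unfolding sortP_def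
      by (auto intro: permutes_not_in)
    then show ?thesis by simp
  qed
qed

lemma sortP_exists:
  assumes "inj_on a {0..<N}"
  shows "\<exists>p. sortP N a p"
proof -
  let ?xs = "map a [0..<N]"
  obtain p where p: "p permutes {..<length ?xs}" "permute_list p ?xs = sort ?xs"
    using mset_eq_permutation[of "sort ?xs" ?xs] by auto
  have pp: "p permutes {0..<N}" using p(1) by (simp add: lessThan_atLeast0)
  have dist: "distinct ?xs" using assms by (simp add: distinct_map)
  have ss: "sorted_wrt (<) (sort ?xs)" using dist by (simp add: strict_sorted_iff)
  have nth: "sort ?xs ! i = a (p i)" if "i < N" for i
  proof -
    have "sort ?xs ! i = ?xs ! p i" using p permute_list_nth[OF p(1)] that by (metis length_map length_upt diff_zero)
    moreover have "p i < N" using pp that by (rule perm_lt)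
    ultimately show ?thesis by simp
  qed
  have "\<forall>i. Suc i < N \<longrightarrow> a (p i) < a (p (Suc i))"
  proof (intro allI impI)
    fix i assume "Suc i < N"
    then have "sort ?xs ! i < sort ?xs ! Suc i" using ss unfolding sorted_wrt_iff_nth_less by simp
    then show "a (p i) < a (p (Suc i))" using nth \<open>Suc i < N\<close> by simp
  qed
  then show ?thesis using pp unfolding sortP_def by blast
qed

lemma sort_perm_sortP:
  assumes "inj_on a {0..<N}"
  shows "sortP N a (sort_perm N a)"
proof -
  obtain p where p: "sortP N a p" using sortP_exists[OF assms] by blast
  have "sort_perm N a = p" unfolding sort_perm_def
    apply (rule the_equality)
    using p sortP_unique[OF assms p] unfolding sortP_def by blast+
  then show ?thesis using p by simp
qed

lemma sortlet_swap:
  assumes "i < N" "j < N" "i \<noteq> j" and b: "\<And>l. l < N \<Longrightarrow> b l = a (Transposition.transpose i j l)"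
  shows "sortlet N b = - sortlet N a"
proof -
  let ?t = "Transposition.transpose i j"
  have tp: "?t permutes {0..<N}" using assms by (simp add: permutes_swap_id)
  have tN: "?t l < N" if "l < N" for l using tp that by (rule perm_lt)
  have img: "?t ` {0..<N} = {0..<N}" using permutes_image[OF tp] .
  have inj_iff: "inj_on b {0..<N} \<longleftrightarrow> inj_on a {0..<N}"
  proof -
    have "inj_on b {0..<N} \<longleftrightarrow> inj_on (a \<circ> ?t) {0..<N}"
      by (rule inj_on_cong) (simp add: b)
    also have "\<dots> \<longleftrightarrow> inj_on a (?t ` {0..<N})"
      using permutes_inj_on[OF tp] by (simp add: comp_inj_on_iff)
    finally show ?thesis using img by simp
  qed
  show ?thesis
  proof (cases "inj_on a {0..<N}")
    case False then show ?thesis using inj_iff unfolding sortlet_def by simp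
  next
    case True
    define p where "p = sort_perm N a"
    have sp: "sortP N a p" using sort_perm_sortP[OF True] p_def by simp
    have pp: "p permutes {0..<N}" using sp unfolding sortP_def by blast
    have pN: "p l < N" if "l < N" for l using pp that by (rule perm_lt)
    have bq: "b ((?t \<circ> p) l) = a (p l)" if "l < N" for l
      using b[OF tN[OF pN[OF that]]] by simp
    have sq: "sortP N b (?t \<circ> p)"
      unfolding sortP_def
    proof (intro conjI allI impI)
      show "?t \<circ> p permutes {0..<N}" using pp tp by (rule permutes_compose)
      fix l assume "Suc l < N"
      then show "b ((?t \<circ> p) l) < b ((?t \<circ> p) (Suc l))"
        using bq[of l] bq[of "Suc l"] sp unfolding sortP_def by simp
    qed
    have binj: "inj_on b {0..<N}" using inj_iff True by simp
    have eq: "sort_perm N b = ?t \<circ> p"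
      using sortP_unique[OF binj sort_perm_sortP[OF binj] sq] .
    have sg: "sign (?t \<circ> p) = - sign p"
    proof -
      have "permutation ?t" "permutation p" using tp pp
        by (auto simp: permutation_permutes)
      then show ?thesis using sign_compose[of ?t p] sign_swap_id[of i j] assms(3) by simp
    qed
    have prod: "(\<Prod>l<N - 1. b ((?t \<circ> p) (Suc l)) - b ((?t \<circ> p) l))
        = (\<Prod>l<N - 1. a (p (Suc l)) - a (p l))"
    proof (rule prod.cong)
      fix l assume "l \<in> {..<N - 1}"
      then have "Suc l < N" by auto
      then show "b ((?t \<circ> p) (Suc l)) - b ((?t \<circ> p) l) = a (p (Suc l)) - a (p l)"
        using bq[of l] bq[of "Suc l"] by simp
    qed simp
    show ?thesis unfolding sortlet_def using True binj eq sg prod p_def by simp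
  qed
qed

lemma pair_sum_swap:
  fixes h :: "nat \<Rightarrow> nat \<Rightarrow> real" and P :: "nat \<Rightarrow> nat \<Rightarrow> bool"
  assumes "i < N" "j < N"
    and Psym: "\<And>a b. P a b = P b a"
    and Pt: "\<And>a b. P (Transposition.transpose i j a) (Transposition.transpose i j b) = P a b"
    and hsym: "\<And>a b. h a b = h b a"
  shows "(\<Sum>(a,b)\<in>{(a,b). a < b \<and> b < N \<and> P a b}. h (Transposition.transpose i j a) (Transposition.transpose i j b))
       = (\<Sum>(a,b)\<in>{(a,b). a < b \<and> b < N \<and> P a b}. h a b)"
proof -
  let ?t = "Transposition.transpose i j"
  let ?S = "{(a,b). a < b \<and> b < N \<and> P a b}"
  define \<phi> where "\<phi> = (\<lambda>(a,b). if ?t a < ?t b then (?t a, ?t b) else (?t b, ?t a))"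
  have tN: "?t l < N" if "l < N" for l using assms(1,2) that by (auto simp: Transposition.transpose_def)
  have inS: "\<phi> x \<in> ?S" if "x \<in> ?S" for x
  proof -
    obtain a b where x0: "x = (a,b)" by (cases x)
    then have x: "x = (a,b)" "a < b" "b < N" "P a b" using that by auto
    have "?t a \<noteq> ?t b" using x transpose_eq_imp_eq[of i j a b] by auto
    moreover have "a < N" using x by simp
    ultimately show ?thesis using x tN[of a] tN[of b] Pt[of a b] Psym[of "?t a" "?t b"]
      unfolding \<phi>_def by auto
  qed
  have inv: "\<phi> (\<phi> x) = x" if "x \<in> ?S" for x
  proof -
    obtain a b where x0: "x = (a,b)" by (cases x)
    then have x: "x = (a,b)" "a < b" using that by auto
    show ?thesis using x transpose_eq_imp_eq[of i j a b] unfolding \<phi>_def by auto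
  qed
  have bij: "bij_betw \<phi> ?S ?S"
  proof (rule bij_betw_byWitness[where f' = \<phi>])
    show "\<phi> ` ?S \<subseteq> ?S" using inS by (simp add: image_subset_iff)
    then show "\<phi> ` ?S \<subseteq> ?S" .
    show "\<forall>x\<in>?S. \<phi> (\<phi> x) = x" using inv by simp
    then show "\<forall>x\<in>?S. \<phi> (\<phi> x) = x" .
  qed
  have "(\<Sum>x\<in>?S. (\<lambda>(a,b). h a b) (\<phi> x)) = (\<Sum>x\<in>?S. (\<lambda>(a,b). h a b) x)"
    using sum.reindex_bij_betw[OF bij] by simp
  moreover have "(\<lambda>(a,b). h a b) (\<phi> x) = (\<lambda>(a,b). h (?t a) (?t b)) x" for x
    unfolding \<phi>_def by (cases x) (auto simp: hsym)
  ultimately show ?thesis by simp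
qed

theorem mainTheorem1:
  fixes N K :: nat and \<rho> :: "nat \<Rightarrow> bool" and \<gamma> :: "nat \<Rightarrow> real"
    and \<beta>1 \<beta>2 :: real and \<alpha> :: "nat \<Rightarrow> (nat \<Rightarrow> real^3) \<Rightarrow> (nat \<Rightarrow> real)"
  assumes "N \<ge> 2" and "K \<ge> 1" and "\<beta>1 \<noteq> 0" and "\<beta>2 \<noteq> 0"
    and equivariant: "\<And>k i j r l. k < K \<Longrightarrow> i < N \<Longrightarrow> j < N \<Longrightarrow> i \<noteq> j \<Longrightarrow> \<rho> i = \<rho> j \<Longrightarrow>
        r \<in> config N \<Longrightarrow> l < N \<Longrightarrow>
        \<alpha> k (swap_conf i j r) l = \<alpha> k r (Transposition.transpose i j l)"
  assumes "r \<in> config N" and "i < N" and "j < N" and "i \<noteq> j" and "\<rho> i = \<rho> j"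
  shows "sortlet_ansatz N \<rho> K \<gamma> \<beta>1 \<beta>2 \<alpha> (swap_conf i j r) = - sortlet_ansatz N \<rho> K \<gamma> \<beta>1 \<beta>2 \<alpha> r"
proof -
  let ?t = "Transposition.transpose i j"
  let ?r = "swap_conf i j r"
  have rt: "\<rho> (?t a) = \<rho> a" for a using assms(10) by (auto simp: Transposition.transpose_def)
  have J: "jastrow N \<rho> \<beta>1 \<beta>2 ?r = jastrow N \<rho> \<beta>1 \<beta>2 r"
  proof -
    have 1: "(\<Sum>(a,b)\<in>{(a,b). a < b \<and> b < N \<and> \<rho> a = \<rho> b}. (\<lambda>a b. (-1/4) * (\<beta>1 / (\<beta>1^2 + norm (r a - r b)))) (?t a) (?t b))
       = (\<Sum>(a,b)\<in>{(a,b). a < b \<and> b < N \<and> \<rho> a = \<rho> b}. (\<lambda>a b. (-1/4) * (\<beta>1 / (\<beta>1^2 + norm (r a - r b)))) a b)"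
      by (rule pair_sum_swap[OF assms(7,8)]) (auto simp: rt norm_minus_commute)
    have 2: "(\<Sum>(a,b)\<in>{(a,b). a < b \<and> b < N \<and> \<rho> a \<noteq> \<rho> b}. (\<lambda>a b. (-1/2) * (\<beta>2 / (\<beta>2^2 + norm (r a - r b)))) (?t a) (?t b))
       = (\<Sum>(a,b)\<in>{(a,b). a < b \<and> b < N \<and> \<rho> a \<noteq> \<rho> b}. (\<lambda>a b. (-1/2) * (\<beta>2 / (\<beta>2^2 + norm (r a - r b)))) a b)"
      by (rule pair_sum_swap[OF assms(7,8)]) (auto simp: rt norm_minus_commute)
    show ?thesis using 1 2 unfolding jastrow_def swap_conf_def by simp
  qed
  have tp: "?t permutes {..<N}" using assms(7,8) by (simp add: permutes_swap_id)
  have NS: "(\<Sum>l<N. norm (?r l)) = (\<Sum>l<N. norm (r l))"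
    unfolding swap_conf_def
    using sum.reindex_bij_betw[OF permutes_imp_bij[OF tp], of "\<lambda>l. norm (r l)"] by simp
  have SL: "sortlet N (\<alpha> k ?r) = - sortlet N (\<alpha> k r)" if "k < K" for k
    by (rule sortlet_swap[OF assms(7,8,9)]) (rule equivariant[OF that assms(7,8,9,10,6)])
  have "(\<Sum>k<K. sortlet N (\<alpha> k ?r) * exp (- \<gamma> k * (\<Sum>l<N. norm (?r l))))
      = - (\<Sum>k<K. sortlet N (\<alpha> k r) * exp (- \<gamma> k * (\<Sum>l<N. norm (r l))))"
    by (simp add: NS SL flip: sum_negf)
  then show ?thesis unfolding sortlet_ansatz_def J by simp
qed

end
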